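(* Let $n\ge 2$ and $D$ be positive integers, let $\Gamma$ be a finite alphabet, and let $B\in\Gamma^*$ have length $2\le|B|\le n$. Let $H:\Gamma^2\to\{0,1\}$ be chosen at random as a $(D,5\log_2 n)$-iterated pair-wise independent function, and let $(B_0,B_1,\dots,B_s)=\mathrm{Split}_H(B)$. Then with probability at least $1-1/n^3$, for all $j\in\{0,\dots,s\}$, $|\mathrm{Dict}(B_j)|\le 5D\log_2 n$.
   Context: For a string $z=z_1\cdots z_m$, $z[i,j]=z_i\cdots z_j$, $z[i,j)=z[i,j-1]$, and $\mathrm{Dict}(z)=\{z[i,i+1]: 1\le i\le m-1\}$ is the set of pairs of consecutive symbols occurring in $z$. $\mathrm{Split}_H(B)$: let $i_1<\dots<i_s$ be all $i\in\{2,\dots,|B|-1\}$ with $H(B[i,i+1])=0$ ($s=0$ if none), let $i_0=1$, $i_{s+1}=|B|+1$, and output $B_j=B[i_j,i_{j+1})$ for $j=0,\dots,s$. A $(D,\ell)$-iterated pair-wise independent function $H:\Gamma^2\to\{0,1\}$ is obtained by choosing independently $h_1,\dots,h_\ell:\Gamma^2\to\{0,\dots,\ell D-1\}$, each uniformly from a pair-wise independent hash family (for $u\ne u'$, $\Pr[h(u)=v\wedge h(u')=v']=1/|V|^2$), and setting $H(ab)=0$ iff $\prod_i h_i(ab)=0$. The quantity $5\log_2 n$ is treated as an integer. *)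

theory Defs
  imports "HOL-Probability.Probability"
begin

text \<open>Strings are lists; positions are 1-based as in the paper:
  the i-th symbol of z is z ! (i - 1).\<close>

definition substr :: "'a list \<Rightarrow> nat \<Rightarrow> nat \<Rightarrow> 'a list" where
  "substr z i j = take (j - i) (drop (i - 1) z)"

definition Dict :: "'a list \<Rightarrow> ('a \<times> 'a) set" where
  "Dict z = {(z ! (i - 1), z ! i) | i. 1 \<le> i \<and> i \<le> length z - 1}"

definition split_positions :: "('a \<times> 'a \<Rightarrow> nat) \<Rightarrow> 'a list \<Rightarrow> nat list" where
  "split_positions H B =
     sorted_list_of_set {i. 2 \<le> i \<and> i \<le> length B - 1 \<and> H (B ! (i - 1), B ! i) = 0}"

definition Split :: "('a \<times> 'a \<Rightarrow> nat) \<Rightarrow> 'a list \<Rightarrow> 'a list list" where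
  "Split H B =
     (let ps = 1 # split_positions H B @ [length B + 1]
      in map (\<lambda>j. substr B (ps ! j) (ps ! (j + 1))) [0..<length ps - 1])"

definition pairwise_indep_family :: "('u \<Rightarrow> 'v) set \<Rightarrow> 'v set \<Rightarrow> bool" where
  "pairwise_indep_family F V \<longleftrightarrow>
     finite F \<and> F \<noteq> {} \<and> finite V \<and> (\<forall>h\<in>F. \<forall>u. h u \<in> V) \<and>
     (\<forall>u u' v v'. u \<noteq> u' \<longrightarrow> v \<in> V \<longrightarrow> v' \<in> V \<longrightarrow>
        measure_pmf.prob (pmf_of_set F) {h. h u = v \<and> h u' = v'} = 1 / (real (card V))^2)"

definition iter_hash_pmf :: "nat \<Rightarrow> ('u \<Rightarrow> 'v) set \<Rightarrow> (nat \<Rightarrow> ('u \<Rightarrow> 'v)) pmf" where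
  "iter_hash_pmf l F = Pi_pmf {..<l} undefined (\<lambda>_. pmf_of_set F)"

definition iterH :: "nat \<Rightarrow> (nat \<Rightarrow> ('u \<Rightarrow> nat)) \<Rightarrow> 'u \<Rightarrow> nat" where
  "iterH l hs = (\<lambda>x. if (\<Prod>i<l. hs i x) = 0 then 0 else 1)"

definition five_log :: "nat \<Rightarrow> nat" where
  "five_log n = nat \<lfloor>5 * log 2 (real n)\<rfloor>"

end

theory Submission
  imports Defs
begin

lemma one_hash:
  fixes F :: "('u \<Rightarrow> nat) set" and S :: "'u set" and V :: nat
  assumes pf: "pairwise_indep_family F {0..<V}" and finS: "finite S" and cS: "card S \<ge> V" and V2: "V \<ge> 2"
  shows "measure_pmf.prob (pmf_of_set F) {h. \<forall>u\<in>S. h u \<noteq> 0} \<le> 1/2"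
proof -
  have finF: "finite F" and neF: "F \<noteq> {}" and rng: "\<And>h u. h \<in> F \<Longrightarrow> h u \<in> {0..<V}"
    and pw: "\<And>u u' v v'. u \<noteq> u' \<Longrightarrow> v < V \<Longrightarrow> v' < V \<Longrightarrow>
        measure_pmf.prob (pmf_of_set F) {h. h u = v \<and> h u' = v'} = 1 / (real V)^2"
    using pf unfolding pairwise_indep_family_def by auto
  define N where "N = real (card F)"
  have Npos: "N > 0" using finF neF by (simp add: N_def card_gt_0_iff)
  have Vpos: "real V > 0" using V2 by simp
  have pr: "\<And>A. measure_pmf.prob (pmf_of_set F) A = real (card {h\<in>F. h \<in> A}) / N"
    using measure_pmf_of_set[OF neF finF] by (simp add: N_def Int_def)
  have c2: "real (card {h\<in>F. h u = v \<and> h u' = v'}) = N / (real V)^2"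
    if "u \<noteq> u'" "v < V" "v' < V" for u u' v v'
    using pw[OF that] pr[of "{h. h u = v \<and> h u' = v'}"] Npos by (simp add: field_simps)
  define m where "m = card S"
  have m2: "m \<ge> 2" using cS V2 by (simp add: m_def)
  have c1: "real (card {h\<in>F. h u = 0}) = N / real V" if "u \<in> S" for u
  proof -
    have "card (S - {u}) \<ge> 1" using that finS m2 by (simp add: m_def card_Diff_singleton)
    then obtain u' where "u' \<in> S - {u}" by (metis card.empty ex_in_conv not_one_le_zero)
    then have u': "u \<noteq> u'" by blast
    have eq: "{h\<in>F. h u = 0} = (\<Union>v\<in>{0..<V}. {h\<in>F. h u = 0 \<and> h u' = v})"
      using rng by blast
    have "card (\<Union>v\<in>{0..<V}. {h\<in>F. h u = 0 \<and> h u' = v}) = (\<Sum>v\<in>{0..<V}. card {h\<in>F. h u = 0 \<and> h u' = v})"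
      by (rule card_UN_disjoint) (use finF in \<open>simp_all, blast\<close>)
    then have "real (card {h\<in>F. h u = 0}) = (\<Sum>v\<in>{0..<V}. real (card {h\<in>F. h u = 0 \<and> h u' = v}))"
      unfolding eq by simp
    also have "\<dots> = (\<Sum>v\<in>{0..<V}. N / (real V)^2)"
      by (rule sum.cong[OF refl], rule c2) (use u' V2 in auto)
    also have "\<dots> = N / real V" using Vpos by (simp add: power2_eq_square)
    finally show ?thesis .
  qed
  define I where "I h u = (if h u = 0 then 1 else 0 :: real)" for h :: "'u \<Rightarrow> nat" and u
  define X where "X h = (\<Sum>u\<in>S. I h u)" for h
  have s1: "(\<Sum>h\<in>F. X h) = real m * N / real V"
  proof -
    have "(\<Sum>h\<in>F. X h) = (\<Sum>u\<in>S. \<Sum>h\<in>F. I h u)" unfolding X_def by (rule sum.swap)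
    also have "\<dots> = (\<Sum>u\<in>S. real (card {h\<in>F. h u = 0}))"
      by (intro sum.cong refl) (simp add: I_def sum.If_cases finF Int_def)
    also have "\<dots> = (\<Sum>u\<in>S. N / real V)" by (intro sum.cong refl) (simp add: c1)
    finally show ?thesis by (simp add: m_def)
  qed
  have prodI: "I h u * I h u' = (if h u = 0 \<and> h u' = 0 then 1 else 0)" for h u u' by (simp add: I_def)
  have s2: "(\<Sum>h\<in>F. (X h)^2) = real m * (N / real V + (real m - 1) * N / (real V)^2)"
  proof -
    have "(\<Sum>h\<in>F. (X h)^2) = (\<Sum>h\<in>F. \<Sum>u\<in>S. \<Sum>u'\<in>S. I h u * I h u')"
      unfolding X_def power2_eq_square sum_product by simp
    also have "\<dots> = (\<Sum>u\<in>S. \<Sum>h\<in>F. \<Sum>u'\<in>S. I h u * I h u')"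
      by (rule sum.swap)
    also have "\<dots> = (\<Sum>u\<in>S. \<Sum>u'\<in>S. \<Sum>h\<in>F. I h u * I h u')"
      by (rule sum.cong[OF refl], rule sum.swap)
    also have "\<dots> = (\<Sum>u\<in>S. \<Sum>u'\<in>S. real (card {h\<in>F. h u = 0 \<and> h u' = 0}))"
      by (intro sum.cong refl) (simp add: prodI sum.If_cases finF Int_def)
    also have "\<dots> = (\<Sum>u\<in>S. N / real V + (real m - 1) * N / (real V)^2)"
    proof (intro sum.cong refl)
      fix u assume u: "u \<in> S"
      have "(\<Sum>u'\<in>S. real (card {h\<in>F. h u = 0 \<and> h u' = 0})) =
            real (card {h\<in>F. h u = 0 \<and> h u = 0}) + (\<Sum>u'\<in>S-{u}. real (card {h\<in>F. h u = 0 \<and> h u' = 0}))"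
        using u finS by (simp add: sum.remove)
      also have "(\<Sum>u'\<in>S-{u}. real (card {h\<in>F. h u = 0 \<and> h u' = 0})) = (\<Sum>u'\<in>S-{u}. N / (real V)^2)"
        by (intro sum.cong refl) (use V2 in \<open>auto intro!: c2\<close>)
      also have "\<dots> = (real m - 1) * N / (real V)^2"
        using u finS m2 by (simp add: m_def card_Diff_singleton of_nat_diff)
      finally show "(\<Sum>u'\<in>S. real (card {h\<in>F. h u = 0 \<and> h u' = 0})) = N / real V + (real m - 1) * N / (real V)^2"
        using c1[OF u] by simp
    qed
    finally show ?thesis by (simp add: m_def)
  qed
  define Z where "Z = real (card {h\<in>F. \<forall>u\<in>S. h u \<noteq> 0})"
  define t where "t = 2 * real m / real V"
  have pt: "(if \<forall>u\<in>S. h u \<noteq> 0 then t^2 else 0) \<le> (X h)^2 - 2 * t * X h + t^2" for h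
  proof (cases "\<forall>u\<in>S. h u \<noteq> 0")
    case True
    then have "X h = 0" unfolding X_def I_def by (intro sum.neutral) auto
    then show ?thesis using True by simp
  next
    case False
    have "0 \<le> (X h - t)^2" by simp
    moreover have "(X h - t)^2 = (X h)^2 - 2*t*X h + t^2" by (simp add: power2_eq_square algebra_simps)
    moreover have "(if \<forall>u\<in>S. h u \<noteq> 0 then t^2 else 0) = 0" using False by (rule if_not_P)
    ultimately show ?thesis by linarith
  qed
  have "Z * t^2 = (\<Sum>h\<in>F. (if \<forall>u\<in>S. h u \<noteq> 0 then t^2 else 0))"
    by (simp add: Z_def sum.If_cases finF Int_def)
  also have "\<dots> \<le> (\<Sum>h\<in>F. (X h)^2 - 2 * t * X h + t^2)" by (rule sum_mono[OF pt])
  also have "\<dots> = (\<Sum>h\<in>F. (X h)^2) - 2 * t * (\<Sum>h\<in>F. X h) + N * t^2"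
    by (simp add: sum.distrib sum_subtractf sum_distrib_left N_def)
  finally have ineq: "Z * t^2 \<le> real m * (N / real V + (real m - 1) * N / (real V)^2) - 2 * t * (real m * N / real V) + N * t^2"
    using s1 s2 by simp
  have mV: "real m \<ge> real V" using cS m_def by simp
  have mpos: "real m > 0" using m2 by simp
  define r where "r = real m"
  define v where "v = real V"
  have vpos: "v > 0" using Vpos v_def by simp
  have rpos: "r > 0" using mpos r_def by simp
  have e1: "real m * (N / real V + (real m - 1) * N / (real V)^2) - 2 * t * (real m * N / real V) + N * t^2
       = r*N/v + r*(r-1)*N/v^2"
    unfolding t_def r_def[symmetric] v_def[symmetric] using vpos by (simp add: field_simps power2_eq_square)
  have e2: "t^2 = 4*r^2/v^2" unfolding t_def r_def v_def by (simp add: power_divide power_mult_distrib)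
  have h1: "Z * (4*r^2/v^2) \<le> r*N/v + r*(r-1)*N/v^2" using ineq e1 e2 by simp
  have "(Z * (4*r^2/v^2)) * v^2 \<le> (r*N/v + r*(r-1)*N/v^2) * v^2"
    by (rule mult_right_mono[OF h1]) simp
  moreover have "(Z * (4*r^2/v^2)) * v^2 = r * (Z * (4 * r))" using vpos by (simp add: field_simps power2_eq_square)
  moreover have "(r*N/v + r*(r-1)*N/v^2) * v^2 = r * (N * v + (r - 1) * N)" using vpos by (simp add: field_simps power2_eq_square)
  ultimately have h2: "r * (Z * (4 * r)) \<le> r * (N * v + (r - 1) * N)" by simp
  have "Z * (4 * r) \<le> N * v + (r - 1) * N"
    using mult_le_cancel_left_pos[OF rpos] h2 by blast
  then have "Z * (4 * real m) \<le> N * real V + (real m - 1) * N" by (simp add: r_def v_def)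
  moreover have "N * real V \<le> N * real m" using mV Npos by (simp add: mult_left_mono)
  moreover have "(real m - 1) * N = N * real m - N" by (simp add: algebra_simps)
  ultimately have "Z * (4 * real m) \<le> N * (2 * real m)" using Npos by linarith
  then have "Z \<le> N / 2" using mpos by (simp add: field_simps)
  then show ?thesis using pr[of "{h. \<forall>u\<in>S. h u \<noteq> 0}"] Npos by (simp add: Z_def)
qed


lemma iterH_ne0: "iterH L hs u \<noteq> 0 \<longleftrightarrow> (\<forall>i<L. hs i u \<noteq> 0)"
  unfolding iterH_def by (auto simp: prod_zero_iff)

lemma iter_hash:
  fixes F :: "('u \<Rightarrow> nat) set" and S :: "'u set" and V :: nat
  assumes pf: "pairwise_indep_family F {0..<V}" and finS: "finite S" and cS: "card S \<ge> V" and V2: "V \<ge> 2"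
  shows "measure_pmf.prob (iter_hash_pmf L F) {hs. \<forall>u\<in>S. iterH L hs u \<noteq> 0} \<le> (1/2)^L"
proof -
  define G where "G = {h. \<forall>u\<in>S. h u \<noteq> (0::nat)}"
  have "{hs. \<forall>u\<in>S. iterH L hs u \<noteq> 0} = Pi {..<L} (\<lambda>_. G)"
    unfolding G_def Pi_def mem_Collect_eq iterH_ne0 by blast
  then have "measure_pmf.prob (iter_hash_pmf L F) {hs. \<forall>u\<in>S. iterH L hs u \<noteq> 0}
       = (\<Prod>i\<in>{..<L}. measure_pmf.prob (pmf_of_set F) G)"
    unfolding iter_hash_pmf_def by (simp add: measure_Pi_pmf_Pi)
  also have "\<dots> \<le> (\<Prod>i\<in>{..<L}. 1/2)"
    by (rule prod_mono) (use one_hash[OF pf finS cS V2] in \<open>auto simp: G_def\<close>)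
  finally show ?thesis by simp
qed

lemma dict_substr:
  assumes "1 \<le> a" "a < b" "b \<le> length B + 1"
  shows "Dict (substr B a b) \<subseteq> insert (B!(a-1), B!a) ((\<lambda>t. (B!t, B!(Suc t))) ` {a..b-3})"
proof
  fix x assume "x \<in> Dict (substr B a b)"
  then obtain i where x: "x = (substr B a b ! (i - 1), substr B a b ! i)" and i: "1 \<le> i" "i \<le> length (substr B a b) - 1"
    unfolding Dict_def by blast
  have len: "length (substr B a b) = b - a" using assms by (simp add: substr_def)
  have nth: "substr B a b ! k = B ! (a - 1 + k)" if "k < b - a" for k
    using that assms by (simp add: substr_def)
  show "x \<in> insert (B!(a-1), B!a) ((\<lambda>t. (B!t, B!(Suc t))) ` {a..b-3})"
  proof (cases "i = 1")
    case True
    then have "x = (B!(a-1), B!a)" using x nth[of 0] nth[of 1] i len assms by simp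
    then show ?thesis by simp
  next
    case False
    define t where "t = a + i - 2"
    have st: "Suc t = a - 1 + i" "t = a - 1 + (i - 1)" using False i assms by (simp_all add: t_def)
    have hh: "Suc (a + i - 2) = a + i - 1" using False i by linarith
    have "x = (B!t, B!(Suc t))" unfolding t_def using x nth[of "i-1"] nth[of i] i len assms False hh
      by (simp add: numeral_2_eq_2)
    moreover have "t \<in> {a..b-3}" using i len False unfolding t_def atLeastAtMost_iff by linarith
    ultimately show ?thesis by blast
  qed
qed


lemma split_piece:
  assumes "2 \<le> length B" "Bj \<in> set (Split H B)"
  shows "\<exists>a b. 1 \<le> a \<and> a < b \<and> b \<le> length B + 1 \<and> Bj = substr B a b \<and>
           (\<forall>i. a < i \<longrightarrow> i < b \<longrightarrow> 2 \<le> i \<longrightarrow> i \<le> length B - 1 \<longrightarrow> H (B!(i-1), B!i) \<noteq> 0)"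
proof -
  define C where "C = {i. 2 \<le> i \<and> i \<le> length B - 1 \<and> H (B ! (i - 1), B ! i) = 0}"
  define ps where "ps = 1 # sorted_list_of_set C @ [length B + 1]"
  have finC: "finite C" by (rule finite_subset[of _ "{..length B}"]) (auto simp: C_def)
  have setC: "set (sorted_list_of_set C) = C" using finC by simp
  have sw: "sorted_wrt (<) ps"
    unfolding ps_def using finC setC assms(1) by (auto simp: sorted_wrt_append C_def)
  have rng: "1 \<le> x \<and> x \<le> length B + 1" if "x \<in> set ps" for x
    using that setC unfolding ps_def by (auto simp: C_def)
  from assms(2) obtain j where j: "j < length ps - 1" and Bj: "Bj = substr B (ps!j) (ps!(j+1))"
    unfolding Split_def split_positions_def Let_def C_def[symmetric] ps_def[symmetric] by auto
  define a where "a = ps!j"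
  define b where "b = ps!(j+1)"
  have ab: "a < b" unfolding a_def b_def using sorted_wrt_nth_less[OF sw, of j "j+1"] j by simp
  have a1: "1 \<le> a" unfolding a_def using rng[OF nth_mem] j by simp
  have bl: "b \<le> length B + 1" unfolding b_def using rng[OF nth_mem, of "j+1"] j by simp
  have nc: "H (B!(i-1), B!i) \<noteq> 0" if "a < i" "i < b" "2 \<le> i" "i \<le> length B - 1" for i
  proof
    assume "H (B!(i-1), B!i) = 0"
    then have "i \<in> C" using that by (simp add: C_def)
    then have "i \<in> set ps" using setC by (simp add: ps_def)
    then obtain k where k: "k < length ps" "ps ! k = i" by (auto simp: in_set_conv_nth)
    show False
    proof (cases "k \<le> j")
      case True
      then have "ps ! k \<le> ps ! j"
      proof (cases "k = j")
        case False
        then have "k < j" using True by simp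
        moreover have "j < length ps" using j by simp
        ultimately show ?thesis using sorted_wrt_nth_less[OF sw, of k j] by simp
      qed simp
      then show False using that k a_def by simp
    next
      case False
      then have "ps ! (j+1) \<le> ps ! k"
      proof (cases "k = j+1")
        case False
        then have "j+1 < k" using \<open>\<not> k \<le> j\<close> by simp
        then show ?thesis using sorted_wrt_nth_less[OF sw, of "j+1" k] k by simp
      qed simp
      then show False using that k b_def by simp
    qed
  qed
  show ?thesis using ab a1 bl nc Bj a_def b_def by blast
qed


lemma five_log_props:
  assumes "n \<ge> (2::nat)"
  shows "five_log n \<ge> 5" "real (five_log n) \<le> 5 * log 2 (real n)" "real (five_log n) > 5 * log 2 (real n) - 1"
proof -
  have lg: "log 2 (real n) \<ge> 1" using assms by simp
  have fl: "\<lfloor>5 * log 2 (real n)\<rfloor> \<ge> 5" using lg by (simp add: le_floor_iff)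
  have eq: "real (five_log n) = of_int \<lfloor>5 * log 2 (real n)\<rfloor>" unfolding five_log_def using fl by simp
  show "five_log n \<ge> 5" unfolding five_log_def using fl by linarith
  show "real (five_log n) \<le> 5 * log 2 (real n)" unfolding eq by linarith
  show "real (five_log n) > 5 * log 2 (real n) - 1" unfolding eq by linarith
qed

lemma final_arith:
  assumes "n \<ge> (2::nat)"
  shows "real n * (1/2)^(five_log n) \<le> 1 / real n ^ 3"
proof -
  define L where "L = five_log n"
  have npos: "real n > 0" using assms by simp
  have "2 powr (5 * log 2 (real n) - 1) \<le> 2 powr (real L)"
    using five_log_props(3)[OF assms] unfolding L_def by (intro powr_mono) auto
  moreover have "2 powr (5 * log 2 (real n) - 1) = real n ^ 5 / 2"
  proof -
    have "2 powr (5 * log 2 (real n)) = (2 powr log 2 (real n)) powr 5"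
      by (simp add: powr_powr mult.commute)
    also have "\<dots> = real n powr 5" using npos by simp
    also have "\<dots> = real n ^ 5" using npos by (simp add: powr_realpow)
    finally show ?thesis by (simp add: powr_diff)
  qed
  moreover have "2 powr (real L) = 2 ^ L" by (simp add: powr_realpow)
  ultimately have h: "real n ^ 5 / 2 \<le> 2 ^ L" by simp
  have "real n * (1/2)^L = real n / 2 ^ L" by (simp add: power_divide)
  also have "\<dots> \<le> real n / (real n ^ 5 / 2)"
    by (rule divide_left_mono[OF h]) (use npos in auto)
  also have "\<dots> = 2 / real n ^ 4" using npos by (simp add: field_simps eval_nat_numeral)
  also have "\<dots> \<le> 1 / real n ^ 3"
  proof -
    have "2 * real n ^ 3 \<le> real n ^ 4" using assms npos by (simp add: eval_nat_numeral)
    then show ?thesis using npos by (simp add: field_simps)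
  qed
  finally show ?thesis unfolding L_def .
qed


theorem lemma2:
  fixes n D :: nat and B :: "'a::finite list" and F :: "('a \<times> 'a \<Rightarrow> nat) set"
  assumes "n \<ge> 2" and "D > 0"
    and "2 \<le> length B" and "length B \<le> n"
    and "pairwise_indep_family F {0..<five_log n * D}"
  shows "measure_pmf.prob (iter_hash_pmf (five_log n) F)
           {hs. \<forall>Bj \<in> set (Split (iterH (five_log n) hs) B).
                  real (card (Dict Bj)) \<le> 5 * real D * log 2 (real n)}
         \<ge> 1 - 1 / real n ^ 3"
proof -
  define L where "L = five_log n"
  define V where "V = L * D"
  define K where "K = 5 * real D * log 2 (real n)"
  have L5: "L \<ge> 5" using five_log_props(1)[OF assms(1)] by (simp add: L_def)
  have "L * 1 \<le> L * D" using assms(2) by (intro mult_le_mono2) simp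
  then have V2: "V \<ge> 2" using L5 unfolding V_def by linarith
  have VK: "real V \<le> K"
  proof -
    have "real L * real D \<le> 5 * log 2 (real n) * real D"
      using five_log_props(2)[OF assms(1)] by (intro mult_right_mono) (auto simp: L_def)
    then show ?thesis by (simp add: V_def K_def mult_ac)
  qed
  have pf: "pairwise_indep_family F {0..<V}" using assms(5) by (simp add: V_def L_def)
  define pr where "pr t = (B!t, B!(Suc t))" for t
  define P where "P a c = pr ` {a..c}" for a c
  define A where "A = {a \<in> {1..n}. \<exists>c. V \<le> card (P a c)}"
  define q where "q a = (LEAST c. V \<le> card (P a c))" for a
  define S where "S a = P a (q a)" for a
  define E where "E a = {hs. \<forall>u\<in>S a. iterH L hs u \<noteq> 0}" for a
  have SA: "V \<le> card (S a) \<and> (\<forall>c. V \<le> card (P a c) \<longrightarrow> S a \<subseteq> P a c)" if aA: "a \<in> A" for a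
  proof -
    obtain c where c: "V \<le> card (P a c)" using aA A_def by blast
    have "V \<le> card (S a)" unfolding S_def q_def by (rule LeastI[of _ c]) (rule c)
    moreover have "S a \<subseteq> P a c'" if "V \<le> card (P a c')" for c'
    proof -
      have "q a \<le> c'" unfolding q_def by (rule Least_le) (rule that)
      then show ?thesis unfolding S_def P_def by (intro image_mono) auto
    qed
    ultimately show ?thesis by blast
  qed
  have incl: "UNIV - (\<Union>a\<in>A. E a) \<subseteq> {hs. \<forall>Bj \<in> set (Split (iterH L hs) B). real (card (Dict Bj)) \<le> K}"
  proof (rule subsetI, rule ccontr)
    fix hs assume hs: "hs \<in> UNIV - (\<Union>a\<in>A. E a)"
      and "hs \<notin> {hs. \<forall>Bj \<in> set (Split (iterH L hs) B). real (card (Dict Bj)) \<le> K}"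
    then obtain Bj where Bj: "Bj \<in> set (Split (iterH L hs) B)" and big: "real (card (Dict Bj)) > K"
      by auto
    obtain a b where ab: "1 \<le> a" "a < b" "b \<le> length B + 1" "Bj = substr B a b"
      and nc: "\<And>i. a < i \<Longrightarrow> i < b \<Longrightarrow> 2 \<le> i \<Longrightarrow> i \<le> length B - 1 \<Longrightarrow> iterH L hs (B!(i-1), B!i) \<noteq> 0"
      using split_piece[OF assms(3) Bj] by blast
    have sub: "Dict Bj \<subseteq> insert (B!(a-1), B!a) (P a (b-3))"
      using dict_substr[OF ab(1-3)] ab(4) by (simp add: P_def pr_def)
    have "card (Dict Bj) \<le> card (insert (B!(a-1), B!a) (P a (b-3)))"
      by (rule card_mono[OF _ sub]) (simp add: P_def)
    also have "\<dots> \<le> Suc (card (P a (b-3)))" by (rule card_insert_le_m1) auto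
    finally have c1: "card (Dict Bj) \<le> Suc (card (P a (b-3)))" .
    have "real (card (Dict Bj)) > real V" using big VK by linarith
    then have cP: "V \<le> card (P a (b-3))" using c1 by linarith
    have aA: "a \<in> A" unfolding A_def using ab assms(4) cP by auto
    have "hs \<in> E a"
      unfolding E_def
    proof (intro CollectI ballI)
      fix u assume "u \<in> S a"
      then have "u \<in> P a (b-3)" using SA[OF aA] cP by blast
      then obtain t where t: "t \<in> {a..b-3}" "u = pr t" unfolding P_def by blast
      have "iterH L hs (B!(Suc t - 1), B!(Suc t)) \<noteq> 0"
        by (rule nc) (use t ab in auto)
      then show "iterH L hs u \<noteq> 0" using t by (simp add: pr_def)
    qed
    then show False using hs aA by blast
  qed
  let ?M = "iter_hash_pmf L F"
  have "measure_pmf.prob ?M (\<Union>a\<in>A. E a) \<le> (\<Sum>a\<in>A. measure_pmf.prob ?M (E a))"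
    by (rule measure_pmf.finite_measure_subadditive_finite) (auto simp: A_def)
  also have "\<dots> \<le> (\<Sum>a\<in>A. (1/2)^L)"
  proof (rule sum_mono)
    fix a assume "a \<in> A"
    then show "measure_pmf.prob ?M (E a) \<le> (1/2)^L"
      unfolding E_def using iter_hash[OF pf _ _ V2, of "S a" L] SA[of a] by (simp add: S_def P_def del: Ball_image_comp)
  qed
  also have "\<dots> = real (card A) * (1/2)^L" by simp
  also have "\<dots> \<le> real n * (1/2)^L"
  proof -
    have "card A \<le> card {1..n}" by (rule card_mono) (auto simp: A_def)
    then show ?thesis by (intro mult_right_mono) auto
  qed
  also have "\<dots> \<le> 1 / real n ^ 3" using final_arith[OF assms(1)] by (simp add: L_def)
  finally have U: "measure_pmf.prob ?M (\<Union>a\<in>A. E a) \<le> 1 / real n ^ 3" .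
  have "measure_pmf.prob ?M (UNIV - (\<Union>a\<in>A. E a)) = 1 - measure_pmf.prob ?M (\<Union>a\<in>A. E a)"
    using measure_pmf.prob_compl[of "\<Union>a\<in>A. E a" ?M] by simp
  moreover have "measure_pmf.prob ?M (UNIV - (\<Union>a\<in>A. E a)) \<le>
      measure_pmf.prob ?M {hs. \<forall>Bj \<in> set (Split (iterH L hs) B). real (card (Dict Bj)) \<le> K}"
    by (rule measure_pmf.finite_measure_mono[OF incl]) simp
  ultimately show ?thesis using U unfolding L_def K_def by linarith
qed

end
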